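(* Let $q,z,m$ be positive integers with $q\geq 2$ and $z<q$, and put $L=\lfloor\frac{q-1}{q-z}\rfloor$. Index rows by $\mathbf{a}=(a_0,\ldots,a_{m-1})\in\mathbb{Z}_q^m$. Define the $q^m\times mLq$ array $\mathbf{P}=(p_{\mathbf{a},(b,\delta,\varepsilon)})$ with columns $(b,\delta,\varepsilon)$, $b\in\mathbb{Z}_q$, $0\leq\delta<m$, $\varepsilon\in\{0,\ldots,L-1\}$, by: $p_{\mathbf{a},(b,\delta,\varepsilon)}=*$ if $a_\delta\in\{b,b-1,\ldots,b-(z-1)\}$, and otherwise $p_{\mathbf{a},(b,\delta,\varepsilon)}=(a_0,\ldots,a_{\delta-1},\,b-\varepsilon(q-z),\,a_{\delta+1},\ldots,a_{m-1},\,a_\delta-b-1)$. Define the $q^m\times q$ array $\mathbf{C}=(c_{\mathbf{a},(b,m)})$ with columns $(b,m)$, $b\in\mathbb{Z}_q$, by: $c_{\mathbf{a},(b,m)}=*$ if $\sum_{l=0}^{m-1}a_l\in\{b,b+1,\ldots,b+(z-1)\}$, and otherwise $c_{\mathbf{a},(b,m)}=(a_0,\ldots,a_{m-1},\,b-\sum_{l=0}^{m-1}a_l-1)$. All arithmetic is modulo $q$. Then $(\mathbf{P},\mathbf{C})$ (the columns of $\mathbf{P}$ followed by those of $\mathbf{C}$) is an $\big((mL+1)q,\ q^m,\ zq^{m-1},\ (q-z)q^m\big)$ placement delivery array. In particular the associated coded caching scheme has $\frac{M}{N}=\frac{z}{q}$ and rate $R=q-z$.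
   Context: A $(K,F,Z,S)$ placement delivery array (PDA) is an $F\times K$ array whose entries are either a special symbol $*$ or one of $S$ distinct non-star symbols (identified with $1,\ldots,S$), such that: (C1) $*$ appears exactly $Z$ times in each column; (C2) each of the $S$ symbols occurs at least once; (C3) for any two distinct entries $p_{j_1,k_1}=p_{j_2,k_2}=s$ with $s$ a non-star symbol, we have $j_1\neq j_2$, $k_1\neq k_2$, and $p_{j_1,k_2}=p_{j_2,k_1}=*$. A $(K,F,Z,S)$ PDA yields an $F$-division coded caching scheme for $K$ users with memory ratio $M/N=Z/F$ and rate $R=S/F$. The non-star symbols here are vectors in $\mathbb{Z}_q^{m+1}$. *)

theory Defs
  imports Complex_Main
begin

text \<open>A placement delivery array given by a row set (size F), a column set (size K)
  and an entry function; None plays the role of the star symbol, Some s a non-star symbol.\<close>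
definition is_PDA ::
  "'r set \<Rightarrow> 'c set \<Rightarrow> ('r \<Rightarrow> 'c \<Rightarrow> 's option) \<Rightarrow> nat \<Rightarrow> nat \<Rightarrow> nat \<Rightarrow> nat \<Rightarrow> bool" where
  "is_PDA Rows Cols p K F Z S \<longleftrightarrow>
     finite Rows \<and> finite Cols \<and> card Cols = K \<and> card Rows = F \<and>
     (\<forall>k\<in>Cols. card {j\<in>Rows. p j k = None} = Z) \<and>
     card {s. \<exists>j\<in>Rows. \<exists>k\<in>Cols. p j k = Some s} = S \<and>
     (\<forall>j1\<in>Rows. \<forall>k1\<in>Cols. \<forall>j2\<in>Rows. \<forall>k2\<in>Cols. \<forall>s.
        (j1, k1) \<noteq> (j2, k2) \<and> p j1 k1 = Some s \<and> p j2 k2 = Some s \<longrightarrow>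
        j1 \<noteq> j2 \<and> k1 \<noteq> k2 \<and> p j1 k2 = None \<and> p j2 k1 = None)"

definition modq :: "nat \<Rightarrow> int \<Rightarrow> nat" where
  "modq q x = nat (x mod int q)"

definition rows :: "nat \<Rightarrow> nat \<Rightarrow> nat list set" where
  "rows q m = {a. length a = m \<and> (\<forall>x\<in>set a. x < q)}"

definition L_of :: "nat \<Rightarrow> nat \<Rightarrow> nat" where
  "L_of q z = (q - 1) div (q - z)"

text \<open>Columns: Inl (b, delta, eps) for the array P, Inr b for the array C (column (b,m)).\<close>
definition cols :: "nat \<Rightarrow> nat \<Rightarrow> nat \<Rightarrow> ((nat \<times> nat \<times> nat) + nat) set" where
  "cols q z m = Inl ` ({..<q} \<times> {..<m} \<times> {..<L_of q z}) \<union> Inr ` {..<q}"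

definition P_entry :: "nat \<Rightarrow> nat \<Rightarrow> nat list \<Rightarrow> nat \<Rightarrow> nat \<Rightarrow> nat \<Rightarrow> nat list option" where
  "P_entry q z a b \<delta> \<epsilon> =
     (if \<exists>i<z. a ! \<delta> = modq q (int b - int i) then None
      else Some (a[\<delta> := modq q (int b - int \<epsilon> * (int q - int z))]
                 @ [modq q (int (a ! \<delta>) - int b - 1)]))"

definition C_entry :: "nat \<Rightarrow> nat \<Rightarrow> nat list \<Rightarrow> nat \<Rightarrow> nat list option" where
  "C_entry q z a b =
     (if \<exists>i<z. modq q (int (sum_list a)) = modq q (int b + int i) then None
      else Some (a @ [modq q (int b - int (sum_list a) - 1)]))"

definition PC_array :: "nat \<Rightarrow> nat \<Rightarrow> nat list \<Rightarrow> (nat \<times> nat \<times> nat) + nat \<Rightarrow> nat list option" where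
  "PC_array q z a c = (case c of Inl (b, \<delta>, \<epsilon>) \<Rightarrow> P_entry q z a b \<delta> \<epsilon>
                              | Inr b \<Rightarrow> C_entry q z a b)"

end

theory Submission
  imports Defs
begin


lemma int_modq: "0 < q \<Longrightarrow> int (modq q x) = x mod int q"
  by (simp add: modq_def)

lemma modq_lt: "0 < q \<Longrightarrow> modq q x < q"
  by (simp add: modq_def nat_less_iff)

lemma modq_nat: "a < q \<Longrightarrow> modq q (int a) = a"
  by (simp add: modq_def nat_mod_as_int[symmetric])

lemma modq_eq: "0 < q \<Longrightarrow> modq q x = modq q y \<longleftrightarrow> x mod int q = y mod int q"
proof -
  assume q: "0 < q"
  have "modq q x = modq q y \<longleftrightarrow> int (modq q x) = int (modq q y)" by (rule of_nat_eq_iff[symmetric])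
  also have "\<dots> \<longleftrightarrow> x mod int q = y mod int q" using int_modq[OF q] by simp
  finally show ?thesis .
qed

lemma mod_eq_ex: "x mod (Q::int) = y mod Q \<Longrightarrow> \<exists>k. x = y + k * Q"
proof -
  assume "x mod Q = y mod Q"
  hence "Q dvd (x - y)" by (simp add: mod_eq_dvd_iff)
  then obtain k where "x - y = Q * k" by (auto elim: dvdE)
  hence "x = y + k * Q" by (simp add: algebra_simps)
  thus ?thesis by blast
qed

lemma starP_iff:
  assumes "0 < q" "z \<le> q" "a < q"
  shows "(\<exists>i<z. a = modq q (int b - int i)) \<longleftrightarrow> (int b - int a) mod int q < int z"
proof
  assume "\<exists>i<z. a = modq q (int b - int i)"
  then obtain i where i: "i < z" "a = modq q (int b - int i)" by blast
  hence ia: "int a = (int b - int i) mod int q" using assms int_modq by simp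
  have iq: "int i < int q" using i assms by simp
  have "(int b - int a) mod int q = (int b - (int b - int i)) mod int q"
    by (simp only: ia mod_diff_right_eq)
  also have "\<dots> = int i" using iq by simp
  finally show "(int b - int a) mod int q < int z" using i by simp
next
  assume h: "(int b - int a) mod int q < int z"
  define i where "i = nat ((int b - int a) mod int q)"
  have ii: "int i = (int b - int a) mod int q" using assms by (simp add: i_def)
  have "(int b - int i) mod int q = (int b - (int b - int a)) mod int q"
    by (simp only: ii mod_diff_right_eq)
  hence "modq q (int b - int i) = modq q (int a)"
    unfolding modq_eq[OF assms(1)] by simp
  hence "a = modq q (int b - int i)" using modq_nat assms by simp
  moreover have "i < z" using h ii by simp
  ultimately show "\<exists>i<z. a = modq q (int b - int i)" by blast
qed

lemma starC_iff:
  assumes "0 < q" "z \<le> q"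
  shows "(\<exists>i<z. modq q (int s) = modq q (int b + int i)) \<longleftrightarrow> (int s - int b) mod int q < int z"
proof
  assume "\<exists>i<z. modq q (int s) = modq q (int b + int i)"
  then obtain i where i: "i < z" "modq q (int s) = modq q (int b + int i)" by blast
  hence h: "int s mod int q = (int b + int i) mod int q" using assms modq_eq by simp
  have iq: "int i < int q" using i assms by simp
  have "(int s - int b) mod int q = (int s mod int q - int b) mod int q"
    by (simp only: mod_diff_left_eq)
  also have "\<dots> = ((int b + int i) mod int q - int b) mod int q" by (simp only: h)
  also have "\<dots> = (int b + int i - int b) mod int q" by (simp only: mod_diff_left_eq)
  also have "\<dots> = int i" using iq by simp
  finally show "(int s - int b) mod int q < int z" using i by simp
next
  assume h: "(int s - int b) mod int q < int z"
  define i where "i = nat ((int s - int b) mod int q)"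
  have ii: "int i = (int s - int b) mod int q" using assms by (simp add: i_def)
  have "(int b + int i) mod int q = (int b + (int s - int b)) mod int q"
    by (simp only: ii mod_add_right_eq)
  hence "modq q (int s) = modq q (int b + int i)"
    unfolding modq_eq[OF assms(1)] by simp
  moreover have "i < z" using h ii by simp
  ultimately show "\<exists>i<z. modq q (int s) = modq q (int b + int i)" by blast
qed

lemma E_bound:
  assumes "z < q" "\<epsilon> < L_of q z"
  shows "\<epsilon> * (q - z) + (q - z) \<le> q - 1"
proof -
  have "(\<epsilon> + 1) * (q - z) \<le> L_of q z * (q - z)" using assms by (intro mult_right_mono) auto
  also have "\<dots> \<le> q - 1" unfolding L_of_def by (simp add: div_times_less_eq_dividend)
  finally have "(\<epsilon> + 1) * (q - z) \<le> q - 1" .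
  thus ?thesis by (simp only: distrib_right mult_1_left)
qed

lemma sum_list_upd:
  "i < length xs \<Longrightarrow> int (sum_list (xs[i := v])) = int (sum_list xs) - int (xs ! i) + int v"
proof (induction xs arbitrary: i)
  case Nil then show ?case by simp
next
  case (Cons x xs) then show ?case by (cases i) auto
qed

lemma negmod:
  assumes "0 < (Q::int)" "x mod Q = u"
  shows "(- x - 1) mod Q = Q - u - 1"
proof -
  obtain k where k: "x = u + k * Q" using mod_eq_ex[of x Q u] assms
    by (metis mod_mod_trivial)
  have e: "- x - 1 = (Q - u - 1) + (-k - 1) * Q" using k by (simp add: algebra_simps)
  have "0 \<le> u" "u < Q" using assms by auto
  have "(- x - 1) mod Q = (Q - u - 1) mod Q" unfolding e by (rule mod_mult_self1)
  thus ?thesis using \<open>0 \<le> u\<close> \<open>u < Q\<close> by simp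
qed



lemma rows_eq: "rows q m = {xs. set xs \<subseteq> {..<q} \<and> length xs = m}"
  unfolding rows_def by auto

lemma card_rows: "card (rows q m) = q ^ m"
  unfolding rows_eq by (simp add: card_lists_length_eq)

lemma cardC:
  assumes "1 \<le> m" "T \<subseteq> {..<q}" "0 < q"
  shows "card {a \<in> rows q m. modq q (int (sum_list a)) \<in> T} = card T * q ^ (m - 1)"
proof -
  let ?f = "\<lambda>(t, xs). modq q (int t - int (sum_list xs)) # xs"
  let ?g = "\<lambda>a. (modq q (int (sum_list a)), tl a)"
  have k1: "modq q (int (modq q (int t - int S) + S)) = t" if "t < q" for t S
  proof -
    have e: "int (modq q (int t - int S) + S) = (int t - int S) mod int q + int S"
      using assms int_modq by simp
    have "((int t - int S) mod int q + int S) mod int q = (int t - int S + int S) mod int q"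
      by (simp only: mod_add_left_eq)
    hence "modq q (int (modq q (int t - int S) + S)) = modq q (int t)"
      unfolding modq_eq[OF assms(3)] e by simp
    thus ?thesis using that modq_nat by simp
  qed
  have k2: "modq q (int (modq q (int x + int S)) - int S) = x" if "x < q" for x S
  proof -
    have e: "int (modq q (int x + int S)) = (int x + int S) mod int q"
      using assms int_modq by simp
    have "((int x + int S) mod int q - int S) mod int q = (int x + int S - int S) mod int q"
      by (simp only: mod_diff_left_eq)
    hence "modq q (int (modq q (int x + int S)) - int S) = modq q (int x)"
      unfolding modq_eq[OF assms(3)] e by simp
    thus ?thesis using that modq_nat by simp
  qed
  have "bij_betw ?f (T \<times> rows q (m - 1)) {a \<in> rows q m. modq q (int (sum_list a)) \<in> T}"
  proof (rule bij_betw_byWitness[where f'="?g"])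
    show "\<forall>a\<in>T \<times> rows q (m - 1). ?g (?f a) = a"
    proof
      fix p assume p: "p \<in> T \<times> rows q (m - 1)"
      obtain t xs where pe: "p = (t, xs)" by (cases p)
      have t: "t < q" using p pe assms by auto
      have "?g (?f p) = (modq q (int (modq q (int t - int (sum_list xs)) + sum_list xs)), xs)"
        unfolding pe by simp
      thus "?g (?f p) = p" using k1[OF t] pe by simp
    qed
    show "\<forall>a\<in>{a \<in> rows q m. modq q (int (sum_list a)) \<in> T}. ?f (?g a) = a"
    proof
      fix a assume a: "a \<in> {a \<in> rows q m. modq q (int (sum_list a)) \<in> T}"
      then obtain x xs where ae: "a = x # xs" using assms unfolding rows_def
        by (cases a) auto
      have x: "x < q" using a ae by (simp add: rows_def)
      have "?f (?g a) = modq q (int (modq q (int x + int (sum_list xs))) - int (sum_list xs)) # xs"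
        unfolding ae by simp
      thus "?f (?g a) = a" using k2[OF x] ae by simp
    qed
    show "?f ` (T \<times> rows q (m - 1)) \<subseteq> {a \<in> rows q m. modq q (int (sum_list a)) \<in> T}"
    proof
      fix a assume "a \<in> ?f ` (T \<times> rows q (m - 1))"
      then obtain t xs where a: "a = modq q (int t - int (sum_list xs)) # xs" "t \<in> T" "xs \<in> rows q (m - 1)"
        by auto
      have t: "t < q" using a assms by auto
      have "length a = m" using a assms by (simp add: rows_def)
      moreover have "\<forall>y\<in>set a. y < q" using a modq_lt assms by (auto simp: rows_def)
      moreover have "modq q (int (sum_list a)) = t" using a(1) k1[OF t] by simp
      ultimately show "a \<in> {a \<in> rows q m. modq q (int (sum_list a)) \<in> T}"
        using a(2) by (simp add: rows_def)
    qed
    show "?g ` {a \<in> rows q m. modq q (int (sum_list a)) \<in> T} \<subseteq> T \<times> rows q (m - 1)"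
    proof
      fix p assume "p \<in> ?g ` {a \<in> rows q m. modq q (int (sum_list a)) \<in> T}"
      then obtain a where a: "p = ?g a" "a \<in> rows q m" "modq q (int (sum_list a)) \<in> T" by auto
      then obtain x xs where ae: "a = x # xs" using assms unfolding rows_def
        by (cases a) auto
      have "xs \<in> rows q (m - 1)" using a(2) ae by (auto simp: rows_def)
      thus "p \<in> T \<times> rows q (m - 1)" using a ae by simp
    qed
  qed
  hence "card {a \<in> rows q m. modq q (int (sum_list a)) \<in> T} = card (T \<times> rows q (m - 1))"
    by (simp add: bij_betw_same_card)
  also have "\<dots> = card T * q ^ (m - 1)"
    using assms finite_subset[OF assms(2)] by (simp add: card_cartesian_product card_rows)
  finally show ?thesis .
qed



lemma finite_rows: "finite (rows q m)"
  unfolding rows_eq by (simp add: finite_lists_length_eq)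

lemma ins_nth: "d \<le> length xs \<Longrightarrow> (take d xs @ x # drop d xs) ! d = x"
  by (simp add: nth_append)
lemma ins_take: "d \<le> length xs \<Longrightarrow> take d (take d xs @ x # drop d xs) = take d xs"
  by simp
lemma ins_drop: "d \<le> length xs \<Longrightarrow> drop (Suc d) (take d xs @ x # drop d xs) = drop d xs"
  by simp
lemma ins_set: "set (take d xs @ x # drop d xs) \<subseteq> insert x (set xs)"
  using set_take_subset set_drop_subset by fastforce
lemma del_set: "set (take d xs @ drop (Suc d) xs) \<subseteq> set xs"
  using set_take_subset set_drop_subset by fastforce

lemma cardP:
  assumes "\<delta> < m" "T \<subseteq> {..<q}"
  shows "card {a \<in> rows q m. a ! \<delta> \<in> T} = card T * q ^ (m - 1)"
proof -
  let ?f = "\<lambda>(x, xs). take \<delta> xs @ x # drop \<delta> xs"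
  let ?g = "\<lambda>a. (a ! \<delta>, take \<delta> a @ drop (Suc \<delta>) a)"
  have "bij_betw ?f (T \<times> rows q (m - 1)) {a \<in> rows q m. a ! \<delta> \<in> T}"
  proof (rule bij_betw_byWitness[where f'="?g"])
    show "\<forall>a\<in>T \<times> rows q (m - 1). ?g (?f a) = a"
    proof
      fix p assume p: "p \<in> T \<times> rows q (m - 1)"
      obtain x xs where pe: "p = (x, xs)" by (cases p)
      have l: "\<delta> \<le> length xs" using p pe assms by (simp add: rows_def)
      show "?g (?f p) = p" unfolding pe using l
        by (simp only: ins_nth ins_take ins_drop prod.case append_take_drop_id)
    qed
    show "\<forall>a\<in>{a \<in> rows q m. a ! \<delta> \<in> T}. ?f (?g a) = a"
    proof
      fix a assume a: "a \<in> {a \<in> rows q m. a ! \<delta> \<in> T}"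
      hence l: "length a = m" by (simp add: rows_def)
      have "take \<delta> (take \<delta> a @ drop (Suc \<delta>) a) = take \<delta> a"
        "drop \<delta> (take \<delta> a @ drop (Suc \<delta>) a) = drop (Suc \<delta>) a"
        using l assms by (simp_all add: min_def)
      hence "?f (?g a) = take \<delta> a @ a ! \<delta> # drop (Suc \<delta>) a" by simp
      also have "\<dots> = a" using l assms by (simp add: id_take_nth_drop[symmetric])
      finally show "?f (?g a) = a" .
    qed
    show "?f ` (T \<times> rows q (m - 1)) \<subseteq> {a \<in> rows q m. a ! \<delta> \<in> T}"
    proof
      fix a assume "a \<in> ?f ` (T \<times> rows q (m - 1))"
      then obtain x xs where a: "a = take \<delta> xs @ x # drop \<delta> xs" "x \<in> T" "xs \<in> rows q (m - 1)"
        by auto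
      have l: "\<delta> \<le> length xs" "length xs = m - 1" using a assms by (auto simp: rows_def)
      have "length a = m" using a(1) l assms by simp
      moreover have "\<forall>y\<in>set a. y < q" using ins_set[of \<delta> xs x] a assms unfolding rows_def by blast
      moreover have "a ! \<delta> \<in> T" using ins_nth[OF l(1), of x] a(1,2) by simp
      ultimately show "a \<in> {a \<in> rows q m. a ! \<delta> \<in> T}" by (simp add: rows_def)
    qed
    show "?g ` {a \<in> rows q m. a ! \<delta> \<in> T} \<subseteq> T \<times> rows q (m - 1)"
    proof
      fix p assume "p \<in> ?g ` {a \<in> rows q m. a ! \<delta> \<in> T}"
      then obtain a where a: "p = ?g a" "a \<in> rows q m" "a ! \<delta> \<in> T" by auto
      have "length (take \<delta> a @ drop (Suc \<delta>) a) = m - 1" using a assms by (simp add: rows_def)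
      moreover have "\<forall>y\<in>set (take \<delta> a @ drop (Suc \<delta>) a). y < q"
        using del_set[of \<delta> a] a unfolding rows_def by blast
      ultimately show "p \<in> T \<times> rows q (m - 1)" using a by (simp add: rows_def)
    qed
  qed
  hence "card {a \<in> rows q m. a ! \<delta> \<in> T} = card (T \<times> rows q (m - 1))"
    by (simp add: bij_betw_same_card)
  also have "\<dots> = card T * q ^ (m - 1)"
    using assms finite_subset[OF assms(2)] by (simp add: card_cartesian_product card_rows)
  finally show ?thesis .
qed



lemma card_TP:
  assumes "z \<le> q" "0 < q"
  shows "card ((\<lambda>i. modq q (int b - int i)) ` {..<z}) = z"
proof -
  have "inj_on (\<lambda>i. modq q (int b - int i)) {..<z}"
  proof (rule inj_onI)
    fix i j assume ij: "i \<in> {..<z}" "j \<in> {..<z}" "modq q (int b - int i) = modq q (int b - int j)"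
    hence "(int b - int i) mod int q = (int b - int j) mod int q" using assms modq_eq by blast
    hence "(int b - (int b - int i) mod int q) mod int q = (int b - (int b - int j) mod int q) mod int q"
      by simp
    hence "(int b - (int b - int i)) mod int q = (int b - (int b - int j)) mod int q"
      by (simp only: mod_diff_right_eq)
    hence "int i mod int q = int j mod int q" by simp
    thus "i = j" using ij assms by simp
  qed
  thus ?thesis by (simp add: card_image)
qed

lemma card_TC:
  assumes "z \<le> q" "0 < q"
  shows "card ((\<lambda>i. modq q (int b + int i)) ` {..<z}) = z"
proof -
  have "inj_on (\<lambda>i. modq q (int b + int i)) {..<z}"
  proof (rule inj_onI)
    fix i j assume ij: "i \<in> {..<z}" "j \<in> {..<z}" "modq q (int b + int i) = modq q (int b + int j)"
    hence "(int b + int i) mod int q = (int b + int j) mod int q" using assms modq_eq by blast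
    hence "((int b + int i) mod int q - int b) mod int q = ((int b + int j) mod int q - int b) mod int q"
      by simp
    hence "(int b + int i - int b) mod int q = (int b + int j - int b) mod int q"
      by (simp only: mod_diff_left_eq)
    hence "int i mod int q = int j mod int q" by simp
    thus "i = j" using ij assms by simp
  qed
  thus ?thesis by (simp add: card_image)
qed



lemma mod_rep: "x = E + k * (Q::int) \<Longrightarrow> 0 \<le> E \<Longrightarrow> E < Q \<Longrightarrow> x mod Q = E"
  by simp

lemma mod_self_rep: "\<exists>k. x mod (Q::int) = x + k * Q"
proof -
  have "x mod Q = x + (- (x div Q)) * Q" by (simp add: minus_div_mult_eq_mod[symmetric])
  thus ?thesis by blast
qed

lemma Eb:
  assumes "z < q" "\<epsilon> < L_of q z"
  shows "0 \<le> int \<epsilon> * (int q - int z)" "int \<epsilon> * (int q - int z) + (int q - int z) \<le> int q - 1"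
proof -
  show "0 \<le> int \<epsilon> * (int q - int z)" using assms by simp
  have "\<epsilon> * (q - z) + (q - z) \<le> q - 1" by (rule E_bound[OF assms])
  hence h: "int (\<epsilon> * (q - z) + (q - z)) \<le> int (q - 1)" by (simp only: of_nat_le_iff)
  have d: "int (q - z) = int q - int z" using assms by simp
  have d1: "int (q - 1) = int q - 1" using assms by simp
  have "int (\<epsilon> * (q - z) + (q - z)) = int \<epsilon> * (int q - int z) + (int q - int z)"
    by (simp only: of_nat_add of_nat_mult d)
  thus "int \<epsilon> * (int q - int z) + (int q - int z) \<le> int q - 1"
    using h d1 by simp
qed

lemma E_mod:
  assumes "0 < q" "0 \<le> E" "E < int q"
  shows "(int b - int (modq q (int b - E))) mod int q = E"
proof -
  have "(int b - int (modq q (int b - E))) mod int q = (int b - (int b - E) mod int q) mod int q"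
    using assms int_modq by simp
  also have "\<dots> = (int b - (int b - E)) mod int q" by (simp only: mod_diff_right_eq)
  also have "\<dots> = E" using assms by simp
  finally show ?thesis .
qed

lemma upd_eq_imp_eq:
  assumes "xs[i := v] = ys[i := w]" "xs ! i = ys ! i" "v = w"
  shows "xs = ys"
proof -
  have "xs = (xs[i := v])[i := xs ! i]" by simp
  also have "\<dots> = (ys[i := w])[i := ys ! i]" using assms by simp
  also have "\<dots> = ys" by simp
  finally show ?thesis .
qed

lemma nat_mod_eq:
  assumes "int a mod int q = int b mod int q" "a < q" "b < q"
  shows "a = b"
  using assms by simp

lemma P_some:
  assumes "P_entry q z a b \<delta> \<epsilon> = Some s" "a \<in> rows q m" "\<delta> < m" "0 < q" "z \<le> q"
  shows "s = a[\<delta> := modq q (int b - int \<epsilon> * (int q - int z))] @ [modq q (int (a!\<delta>) - int b - 1)]"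
    "int z \<le> (int b - int (a ! \<delta>)) mod int q"
proof -
  have aq: "a ! \<delta> < q" using assms by (simp add: rows_def)
  show "s = a[\<delta> := modq q (int b - int \<epsilon> * (int q - int z))] @ [modq q (int (a!\<delta>) - int b - 1)]"
    using assms(1) by (simp add: P_entry_def split: if_splits)
  have "\<not> (\<exists>i<z. a ! \<delta> = modq q (int b - int i))"
    using assms(1) by (auto simp: P_entry_def split: if_splits)
  thus "int z \<le> (int b - int (a ! \<delta>)) mod int q"
    using starP_iff[OF assms(4,5) aq] by simp
qed

lemma P_none:
  assumes "(int b - int (a ! \<delta>)) mod int q < int z" "a \<in> rows q m" "\<delta> < m" "0 < q" "z \<le> q"
  shows "P_entry q z a b \<delta> \<epsilon> = None"
proof -
  have aq: "a ! \<delta> < q" using assms by (simp add: rows_def)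
  show ?thesis using assms(1) starP_iff[OF assms(4,5) aq] by (simp add: P_entry_def)
qed

lemma C_some:
  assumes "C_entry q z a b = Some s" "0 < q" "z \<le> q"
  shows "s = a @ [modq q (int b - int (sum_list a) - 1)]"
    "int z \<le> (int (sum_list a) - int b) mod int q"
proof -
  show "s = a @ [modq q (int b - int (sum_list a) - 1)]"
    using assms(1) by (simp add: C_entry_def split: if_splits)
  have "\<not> (\<exists>i<z. modq q (int (sum_list a)) = modq q (int b + int i))"
    using assms(1) by (auto simp: C_entry_def split: if_splits)
  thus "int z \<le> (int (sum_list a) - int b) mod int q"
    using starC_iff[OF assms(2,3)] by simp
qed

lemma C_none:
  assumes "(int (sum_list a) - int b) mod int q < int z" "0 < q" "z \<le> q"
  shows "C_entry q z a b = None"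
  using assms starC_iff[OF assms(2,3)] by (simp add: C_entry_def)



lemma E_lt_z:
  assumes "z < q" "\<epsilon> < L_of q z"
  shows "int \<epsilon> * (int q - int z) < int z" "0 \<le> int \<epsilon> * (int q - int z)"
  using Eb[OF assms] by auto

lemma case_PP_diff:
  assumes "P_entry q z a1 b1 d1 e1 = Some s" "P_entry q z a2 b2 d2 e2 = Some s"
    "a1 \<in> rows q m" "a2 \<in> rows q m" "d1 < m" "d2 < m" "d1 \<noteq> d2" "z < q" "e2 < L_of q z"
  shows "P_entry q z a1 b2 d2 e2 = None"
proof -
  have q0: "0 < q" "z \<le> q" using assms by auto
  let ?x1 = "modq q (int b1 - int e1 * (int q - int z))"
  let ?x2 = "modq q (int b2 - int e2 * (int q - int z))"
  have s1: "s = a1[d1 := ?x1] @ [modq q (int (a1!d1) - int b1 - 1)]" by (rule P_some(1)[OF assms(1,3,5) q0])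
  have s2: "s = a2[d2 := ?x2] @ [modq q (int (a2!d2) - int b2 - 1)]" by (rule P_some(1)[OF assms(2,4,6) q0])
  have len: "length a1 = m" "length a2 = m" using assms by (auto simp: rows_def)
  from s1 s2 have "a1[d1 := ?x1] = a2[d2 := ?x2]" by simp
  hence "a1[d1 := ?x1] ! d2 = a2[d2 := ?x2] ! d2" by simp
  hence a1d2: "a1 ! d2 = ?x2" using len assms(6,7) by simp
  have "(int b2 - int (a1 ! d2)) mod int q = int e2 * (int q - int z)"
    unfolding a1d2 using E_lt_z[OF assms(8,9)] q0 by (intro E_mod) auto
  hence "(int b2 - int (a1 ! d2)) mod int q < int z" using E_lt_z[OF assms(8,9)] by simp
  thus ?thesis using P_none[OF _ assms(3,6) q0] by blast
qed

lemma case_CP: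
  assumes "C_entry q z a1 b1 = Some s" "P_entry q z a2 b2 d2 e2 = Some s"
    "a1 \<in> rows q m" "a2 \<in> rows q m" "d2 < m" "z < q" "e2 < L_of q z"
  shows "P_entry q z a1 b2 d2 e2 = None"
proof -
  have q0: "0 < q" "z \<le> q" using assms by auto
  let ?x2 = "modq q (int b2 - int e2 * (int q - int z))"
  have s1: "s = a1 @ [modq q (int b1 - int (sum_list a1) - 1)]" by (rule C_some(1)[OF assms(1) q0])
  have s2: "s = a2[d2 := ?x2] @ [modq q (int (a2!d2) - int b2 - 1)]" by (rule P_some(1)[OF assms(2,4,5) q0])
  have len: "length a1 = m" "length a2 = m" using assms by (auto simp: rows_def)
  from s1 s2 have "a1 = a2[d2 := ?x2]" by simp
  hence a1d2: "a1 ! d2 = ?x2" using len assms(5) by simp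
  have "(int b2 - int (a1 ! d2)) mod int q = int e2 * (int q - int z)"
    unfolding a1d2 using E_lt_z[OF assms(6,7)] q0 by (intro E_mod) auto
  hence "(int b2 - int (a1 ! d2)) mod int q < int z" using E_lt_z[OF assms(6,7)] by simp
  thus ?thesis using P_none[OF _ assms(3,5) q0] by blast
qed

lemma case_CC:
  assumes "C_entry q z a1 b1 = Some s" "C_entry q z a2 b2 = Some s"
    "b1 < q" "b2 < q" "z < q"
  shows "a1 = a2 \<and> b1 = b2"
proof -
  have q0: "0 < q" "z \<le> q" using assms by auto
  have s1: "s = a1 @ [modq q (int b1 - int (sum_list a1) - 1)]" by (rule C_some(1)[OF assms(1) q0])
  have s2: "s = a2 @ [modq q (int b2 - int (sum_list a2) - 1)]" by (rule C_some(1)[OF assms(2) q0])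
  from s1[symmetric] s2 have "a1 @ [modq q (int b1 - int (sum_list a1) - 1)] = a2 @ [modq q (int b2 - int (sum_list a2) - 1)]"
    by (rule trans)
  hence c: "a1 = a2 \<and>
    modq q (int b1 - int (sum_list a1) - 1) = modq q (int b2 - int (sum_list a2) - 1)"
    by (rule iffD1[OF append1_eq_conv])
  hence aa: "a1 = a2" by blast
  from c have c2: "modq q (int b1 - int (sum_list a1) - 1) = modq q (int b2 - int (sum_list a2) - 1)"
    by blast
  have "modq q (int b1 - int (sum_list a1) - 1) = modq q (int b2 - int (sum_list a1) - 1)"
    using c2 unfolding aa .
  hence "(int b1 - int (sum_list a1) - 1) mod int q = (int b2 - int (sum_list a1) - 1) mod int q"
    using modq_eq[OF q0(1)] by simp
  then obtain k where "int b1 - int (sum_list a1) - 1 = int b2 - int (sum_list a1) - 1 + k * int q"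
    using mod_eq_ex by blast
  hence "int b1 = int b2 + k * int q" by simp
  hence "int b1 mod int q = int b2 mod int q" by simp
  hence "b1 = b2" using assms(3,4) by simp
  thus ?thesis using aa by simp
qed

lemma case_PC:
  assumes "P_entry q z a1 b1 d1 e1 = Some s" "C_entry q z a2 b2 = Some s"
    "a1 \<in> rows q m" "a2 \<in> rows q m" "d1 < m" "z < q" "e1 < L_of q z"
  shows "C_entry q z a1 b2 = None"
proof -
  have q0: "0 < q" "z \<le> q" using assms by auto
  define E where "E = int e1 * (int q - int z)"
  let ?x1 = "modq q (int b1 - E)"
  have s1: "s = a1[d1 := ?x1] @ [modq q (int (a1!d1) - int b1 - 1)]"
    unfolding E_def by (rule P_some(1)[OF assms(1,3,5) q0])
  have s2: "s = a2 @ [modq q (int b2 - int (sum_list a2) - 1)]" by (rule C_some(1)[OF assms(2) q0])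
  have len: "length a1 = m" "length a2 = m" using assms by (auto simp: rows_def)
  from s1[symmetric] s2 have "a1[d1 := ?x1] @ [modq q (int (a1!d1) - int b1 - 1)] = a2 @ [modq q (int b2 - int (sum_list a2) - 1)]"
    by (rule trans)
  hence c: "a1[d1 := ?x1] = a2 \<and>
    modq q (int (a1!d1) - int b1 - 1) = modq q (int b2 - int (sum_list a2) - 1)"
    by (rule iffD1[OF append1_eq_conv])
  hence a2e: "a1[d1 := ?x1] = a2" by blast
  from c have ye: "modq q (int (a1!d1) - int b1 - 1) = modq q (int b2 - int (sum_list a2) - 1)"
    by blast
  have sum2: "int (sum_list a2) = int (sum_list a1) - int (a1 ! d1) + int ?x1"
    unfolding a2e[symmetric] using sum_list_upd len assms(5) by simp
  from ye have "(int (a1!d1) - int b1 - 1) mod int q = (int b2 - int (sum_list a2) - 1) mod int q"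
    using modq_eq[OF q0(1)] by simp
  then obtain k where k: "int (a1!d1) - int b1 - 1 = int b2 - int (sum_list a2) - 1 + k * int q"
    using mod_eq_ex by blast
  obtain k' where k': "(int b1 - E) mod int q = (int b1 - E) + k' * int q"
    using mod_self_rep by blast
  have x1: "int ?x1 = (int b1 - E) + k' * int q" using k' int_modq q0 by simp
  have "int (sum_list a1) - int b2 = E + (k - k') * int q"
    using k x1 sum2 by (simp add: algebra_simps)
  hence "(int (sum_list a1) - int b2) mod int q = E"
    using E_lt_z[OF assms(6,7)] q0 unfolding E_def by (intro mod_rep) auto
  hence "(int (sum_list a1) - int b2) mod int q < int z"
    using E_lt_z[OF assms(6,7)] unfolding E_def by simp
  thus ?thesis using C_none q0 by blast
qed



lemma case_PP_same:
  assumes "P_entry q z a1 b1 d e1 = Some s" "P_entry q z a2 b2 d e2 = Some s"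
    "a1 \<in> rows q m" "a2 \<in> rows q m" "d < m" "z < q" "e1 < L_of q z" "e2 < L_of q z"
    "b1 < q" "b2 < q" "(a1, b1, e1) \<noteq> (a2, b2, e2)"
  shows "P_entry q z a1 b2 d e2 = None"
proof -
  have q0: "0 < q" "z \<le> q" using assms by auto
  define Q where "Q = int q"
  define E1 where "E1 = int e1 * (int q - int z)"
  define E2 where "E2 = int e2 * (int q - int z)"
  let ?x1 = "modq q (int b1 - E1)"
  let ?x2 = "modq q (int b2 - E2)"
  have s1: "s = a1[d := ?x1] @ [modq q (int (a1!d) - int b1 - 1)]"
    unfolding E1_def by (rule P_some(1)[OF assms(1,3,5) q0])
  have s2: "s = a2[d := ?x2] @ [modq q (int (a2!d) - int b2 - 1)]"
    unfolding E2_def by (rule P_some(1)[OF assms(2,4,5) q0])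
  have uz: "int z \<le> (int b1 - int (a1 ! d)) mod int q" by (rule P_some(2)[OF assms(1,3,5) q0])
  have len: "length a1 = m" "length a2 = m" using assms by (auto simp: rows_def)
  have a1q: "a1 ! d < q" "a2 ! d < q" using assms by (auto simp: rows_def)
  from s1[symmetric] s2 have "a1[d := ?x1] @ [modq q (int (a1!d) - int b1 - 1)] = a2[d := ?x2] @ [modq q (int (a2!d) - int b2 - 1)]"
    by (rule trans)
  hence c: "a1[d := ?x1] = a2[d := ?x2] \<and> modq q (int (a1!d) - int b1 - 1) = modq q (int (a2!d) - int b2 - 1)"
    by (rule iffD1[OF append1_eq_conv])
  hence lu: "a1[d := ?x1] = a2[d := ?x2]" by blast
  from c have ye: "modq q (int (a1!d) - int b1 - 1) = modq q (int (a2!d) - int b2 - 1)" by blast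
  from lu have "a1[d := ?x1] ! d = a2[d := ?x2] ! d" by simp
  hence xe: "?x1 = ?x2" using len assms(5) by simp
  hence "(int b1 - E1) mod int q = (int b2 - E2) mod int q" using modq_eq[OF q0(1)] by simp
  then obtain k where k: "int b1 - E1 = int b2 - E2 + k * Q" unfolding Q_def using mod_eq_ex by blast
  define u where "u = (int b1 - int (a1 ! d)) mod int q"
  obtain k' where k': "u = int b1 - int (a1 ! d) + k' * Q" unfolding u_def Q_def using mod_self_rep by blast
  have u1: "int z \<le> u" "u < Q" using uz q0 unfolding u_def Q_def by auto
  have B1: "0 \<le> E1" "E1 < int z" "0 \<le> E2" "E2 < int z"
    using E_lt_z[OF assms(6,7)] E_lt_z[OF assms(6,8)] unfolding E1_def E2_def by auto
  have Qz: "int z < Q" unfolding Q_def using assms by simp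
  have dif: "E2 - E1 = (int e2 - int e1) * (Q - int z)"
    unfolding E1_def E2_def Q_def by (simp add: left_diff_distrib)
  have ne: "e1 \<noteq> e2"
  proof
    assume e: "e1 = e2"
    hence "E1 = E2" unfolding E1_def E2_def by simp
    hence "int b1 = int b2 + k * Q" using k by simp
    hence "int b1 mod Q = int b2 mod Q" by simp
    hence bb: "b1 = b2" using assms(9,10) unfolding Q_def by simp
    from ye have "(int (a1!d) - int b1 - 1) mod int q = (int (a2!d) - int b2 - 1) mod int q"
      using modq_eq[OF q0(1)] by simp
    then obtain k2 where "int (a1!d) - int b1 - 1 = int (a2!d) - int b2 - 1 + k2 * int q"
      using mod_eq_ex by blast
    hence "int (a1!d) = int (a2!d) + k2 * int q" using bb by simp
    hence "int (a1!d) mod int q = int (a2!d) mod int q" by simp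
    hence "a1 ! d = a2 ! d" using a1q by simp
    hence "a1 = a2" using upd_eq_imp_eq[OF lu _ xe] by blast
    thus False using assms(11) e bb by simp
  qed
  have "(int b2 - int (a1 ! d)) mod int q < int z"
  proof (cases "e1 < e2")
    case True
    hence "1 \<le> int e2 - int e1" by simp
    hence "1 * (Q - int z) \<le> (int e2 - int e1) * (Q - int z)"
      using Qz by (intro mult_right_mono) auto
    hence g: "Q - int z \<le> E2 - E1" using dif by simp
    define v where "v = u + E2 - E1 - Q"
    have "int b2 - int (a1 ! d) = v + (1 - k' - k) * Q"
      unfolding v_def using k k' by (simp add: algebra_simps)
    moreover have "0 \<le> v" "v < int z" "v < Q" using g u1 B1 Qz unfolding v_def by linarith+
    ultimately have "(int b2 - int (a1 ! d)) mod Q = v" by (intro mod_rep) auto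
    thus ?thesis using \<open>v < int z\<close> unfolding Q_def by simp
  next
    case False
    hence "e2 < e1" using ne by simp
    hence "1 \<le> int e1 - int e2" by simp
    hence "1 * (Q - int z) \<le> (int e1 - int e2) * (Q - int z)"
      using Qz by (intro mult_right_mono) auto
    moreover have "E1 - E2 = (int e1 - int e2) * (Q - int z)" using dif by (simp add: algebra_simps)
    ultimately have g: "Q - int z \<le> E1 - E2" by simp
    define v where "v = u - (E1 - E2)"
    have "int b2 - int (a1 ! d) = v + (- k' - k) * Q"
      unfolding v_def using k k' by (simp add: algebra_simps)
    moreover have "0 \<le> v" "v < int z" "v < Q" using g u1 B1 Qz unfolding v_def by linarith+
    ultimately have "(int b2 - int (a1 ! d)) mod Q = v" by (intro mod_rep) auto
    thus ?thesis using \<open>v < int z\<close> unfolding Q_def by simp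
  qed
  thus ?thesis using P_none[OF _ assms(3,5) q0] by blast
qed



lemma cols_cases:
  assumes "k \<in> cols q z m"
  obtains b d e where "k = Inl (b, d, e)" "b < q" "d < m" "e < L_of q z"
  | b where "k = Inr b" "b < q"
  using assms unfolding cols_def by auto

lemma dir:
  assumes "z < q" "a1 \<in> rows q m" "a2 \<in> rows q m" "k1 \<in> cols q z m" "k2 \<in> cols q z m"
    "(a1, k1) \<noteq> (a2, k2)" "PC_array q z a1 k1 = Some s" "PC_array q z a2 k2 = Some s"
  shows "PC_array q z a1 k2 = None"
proof -
  show ?thesis
  proof (rule cols_cases[OF assms(4)])
    fix b1 d1 e1 assume k1: "k1 = Inl (b1, d1, e1)" "b1 < q" "d1 < m" "e1 < L_of q z"
    show ?thesis
    proof (rule cols_cases[OF assms(5)])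
      fix b2 d2 e2 assume k2: "k2 = Inl (b2, d2, e2)" "b2 < q" "d2 < m" "e2 < L_of q z"
      have h1: "P_entry q z a1 b1 d1 e1 = Some s" using assms(7) k1 by (simp add: PC_array_def)
      have h2: "P_entry q z a2 b2 d2 e2 = Some s" using assms(8) k2 by (simp add: PC_array_def)
      show ?thesis
      proof (cases "d1 = d2")
        case True
        have ne: "(a1, b1, e1) \<noteq> (a2, b2, e2)" using assms(6) k1 k2 True by auto
        have "P_entry q z a1 b2 d2 e2 = None"
          using case_PP_same[OF h1 h2[folded True] assms(2,3) k1(3) assms(1) k1(4) k2(4) k1(2) k2(2) ne] True
          by simp
        thus ?thesis using k2 by (simp add: PC_array_def)
      next
        case False
        have "P_entry q z a1 b2 d2 e2 = None"
          using case_PP_diff[OF h1 h2 assms(2,3) k1(3) k2(3) False assms(1) k2(4)] .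
        thus ?thesis using k2 by (simp add: PC_array_def)
      qed
    next
      fix b2 assume k2: "k2 = Inr b2" "b2 < q"
      have h1: "P_entry q z a1 b1 d1 e1 = Some s" using assms(7) k1 by (simp add: PC_array_def)
      have h2: "C_entry q z a2 b2 = Some s" using assms(8) k2 by (simp add: PC_array_def)
      have "C_entry q z a1 b2 = None"
        using case_PC[OF h1 h2 assms(2,3) k1(3) assms(1) k1(4)] .
      thus ?thesis using k2 by (simp add: PC_array_def)
    qed
  next
    fix b1 assume k1: "k1 = Inr b1" "b1 < q"
    show ?thesis
    proof (rule cols_cases[OF assms(5)])
      fix b2 d2 e2 assume k2: "k2 = Inl (b2, d2, e2)" "b2 < q" "d2 < m" "e2 < L_of q z"
      have h1: "C_entry q z a1 b1 = Some s" using assms(7) k1 by (simp add: PC_array_def)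
      have h2: "P_entry q z a2 b2 d2 e2 = Some s" using assms(8) k2 by (simp add: PC_array_def)
      have "P_entry q z a1 b2 d2 e2 = None"
        using case_CP[OF h1 h2 assms(2,3) k2(3) assms(1) k2(4)] .
      thus ?thesis using k2 by (simp add: PC_array_def)
    next
      fix b2 assume k2: "k2 = Inr b2" "b2 < q"
      have h1: "C_entry q z a1 b1 = Some s" using assms(7) k1 by (simp add: PC_array_def)
      have h2: "C_entry q z a2 b2 = Some s" using assms(8) k2 by (simp add: PC_array_def)
      have "a1 = a2 \<and> b1 = b2" using case_CC[OF h1 h2 k1(2) k2(2) assms(1)] .
      hence False using assms(6) k1 k2 by simp
      thus ?thesis ..
    qed
  qed
qed

lemma card_cols:
  "card (cols q z m) = (m * L_of q z + 1) * q"
proof -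
  have "card (cols q z m) = card (Inl ` ({..<q} \<times> {..<m} \<times> {..<L_of q z}) :: ((nat \<times> nat \<times> nat) + nat) set)
      + card (Inr ` {..<q} :: ((nat \<times> nat \<times> nat) + nat) set)"
    unfolding cols_def by (rule card_Un_disjoint) auto
  also have "\<dots> = q * (m * L_of q z) + q"
    by (simp add: card_image card_cartesian_product)
  finally show ?thesis by (simp add: algebra_simps)
qed

lemma finite_cols: "finite (cols q z m)"
  unfolding cols_def by simp

lemma Zcount:
  assumes "z < q" "1 \<le> m" "k \<in> cols q z m"
  shows "card {j \<in> rows q m. PC_array q z j k = None} = z * q ^ (m - 1)"
proof -
  have q0: "0 < q" "z \<le> q" using assms by auto
  show ?thesis
  proof (rule cols_cases[OF assms(3)])
    fix b d e assume 1: "k = Inl (b, d, e)" "b < q" "d < m" "e < L_of q z"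
    let ?T = "(\<lambda>i. modq q (int b - int i)) ` {..<z}"
    have "{j \<in> rows q m. PC_array q z j k = None} = {a \<in> rows q m. a ! d \<in> ?T}"
      using 1 by (auto simp: PC_array_def P_entry_def split: if_splits)
    also have "card \<dots> = card ?T * q ^ (m - 1)"
      using 1 modq_lt[OF q0(1)] by (intro cardP) auto
    also have "card ?T = z" using card_TP q0 by simp
    finally show ?thesis .
  next
    fix b assume 2: "k = Inr b" "b < q"
    let ?T = "(\<lambda>i. modq q (int b + int i)) ` {..<z}"
    have "{j \<in> rows q m. PC_array q z j k = None} = {a \<in> rows q m. modq q (int (sum_list a)) \<in> ?T}"
      using 2 by (auto simp: PC_array_def C_entry_def split: if_splits)
    also have "card \<dots> = card ?T * q ^ (m - 1)"
      using assms modq_lt[OF q0(1)] by (intro cardC) auto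
    also have "card ?T = z" using card_TC q0 by simp
    finally show ?thesis .
  qed
qed

lemma last_bound:
  assumes "0 < q" "int z \<le> x mod int q" "y = modq q (- x - 1)"
  shows "y < q - z"
proof -
  have "(- x - 1) mod int q = int q - x mod int q - 1" using negmod assms by simp
  hence "int y = int q - x mod int q - 1" using assms int_modq by simp
  thus ?thesis using assms by linarith
qed

lemma sym_sub:
  assumes "z < q" "a \<in> rows q m" "k \<in> cols q z m" "PC_array q z a k = Some s"
  shows "\<exists>a' t. s = a' @ [t] \<and> a' \<in> rows q m \<and> t < q - z"
proof -
  have q0: "0 < q" "z \<le> q" using assms by auto
  show ?thesis
  proof (rule cols_cases[OF assms(3)])
    fix b d e assume 1: "k = Inl (b, d, e)" "b < q" "d < m" "e < L_of q z"
    have h: "P_entry q z a b d e = Some s" using assms(4) 1 by (simp add: PC_array_def)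
    let ?x = "modq q (int b - int e * (int q - int z))"
    let ?y = "modq q (int (a!d) - int b - 1)"
    have s: "s = a[d := ?x] @ [?y]" by (rule P_some(1)[OF h assms(2) 1(3) q0])
    have u: "int z \<le> (int b - int (a ! d)) mod int q" by (rule P_some(2)[OF h assms(2) 1(3) q0])
    have "?y = modq q (- (int b - int (a ! d)) - 1)" by (simp add: algebra_simps)
    hence y: "?y < q - z" using last_bound[OF q0(1) u] by blast
    have "a[d := ?x] \<in> rows q m" using assms(2) modq_lt[OF q0(1)] set_update_subset_insert
      unfolding rows_def by fastforce
    thus ?thesis using s y by blast
  next
    fix b assume 2: "k = Inr b" "b < q"
    have h: "C_entry q z a b = Some s" using assms(4) 2 by (simp add: PC_array_def)
    let ?y = "modq q (int b - int (sum_list a) - 1)"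
    have s: "s = a @ [?y]" by (rule C_some(1)[OF h q0])
    have u: "int z \<le> (int (sum_list a) - int b) mod int q" by (rule C_some(2)[OF h q0])
    have "?y = modq q (- (int (sum_list a) - int b) - 1)" by (simp add: algebra_simps)
    hence y: "?y < q - z" using last_bound[OF q0(1) u] by blast
    thus ?thesis using s assms(2) by blast
  qed
qed

lemma sym_sup:
  assumes "z < q" "a \<in> rows q m" "t < q - z"
  shows "\<exists>k\<in>cols q z m. PC_array q z a k = Some (a @ [t])"
proof -
  have q0: "0 < q" "z \<le> q" using assms by auto
  define S where "S = int (sum_list a)"
  define b where "b = modq q (int t + 1 + S)"
  have bq: "b < q" unfolding b_def using modq_lt q0 by blast
  have ib: "int b = (int t + 1 + S) mod int q" unfolding b_def using int_modq q0 by blast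
  have tq: "int t mod int q = int t" using assms by simp
  have "(S - int b) mod int q = (S - (int t + 1 + S)) mod int q"
    unfolding ib by (simp only: mod_diff_right_eq)
  also have "\<dots> = (- int t - 1) mod int q"
  proof -
    have e: "S - (int t + 1 + S) = - int t - 1" by simp
    show ?thesis by (simp only: e)
  qed
  also have "\<dots> = int q - int t - 1" using negmod[OF _ tq] q0 by simp
  finally have ns: "(S - int b) mod int q = int q - int t - 1" .
  hence "\<not> (S - int b) mod int q < int z" using assms by simp
  hence nst: "\<not> (\<exists>i<z. modq q (int (sum_list a)) = modq q (int b + int i))"
    using starC_iff[OF q0] unfolding S_def by simp
  have "(int b - S - 1) mod int q = ((int t + 1 + S) mod int q - (S + 1)) mod int q"
    unfolding ib by (simp add: algebra_simps)
  also have "\<dots> = (int t + 1 + S - (S + 1)) mod int q" by (simp only: mod_diff_left_eq)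
  also have "\<dots> = int t" using tq by simp
  finally have "(int b - S - 1) mod int q = int t" .
  hence yt: "modq q (int b - int (sum_list a) - 1) = t" unfolding S_def modq_def by simp
  have "C_entry q z a b = Some (a @ [t])" using nst yt by (simp add: C_entry_def)
  moreover have "Inr b \<in> cols q z m" using bq unfolding cols_def by simp
  ultimately show ?thesis by (force simp: PC_array_def)
qed

lemma Scount:
  assumes "z < q"
  shows "card {s. \<exists>j\<in>rows q m. \<exists>k\<in>cols q z m. PC_array q z j k = Some s} = (q - z) * q ^ m"
proof -
  have eq: "{s. \<exists>j\<in>rows q m. \<exists>k\<in>cols q z m. PC_array q z j k = Some s}
      = (\<lambda>(a, t). a @ [t]) ` (rows q m \<times> {..<q - z})"
  proof
    show "{s. \<exists>j\<in>rows q m. \<exists>k\<in>cols q z m. PC_array q z j k = Some s}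
      \<subseteq> (\<lambda>(a, t). a @ [t]) ` (rows q m \<times> {..<q - z})"
    proof
      fix s assume "s \<in> {s. \<exists>j\<in>rows q m. \<exists>k\<in>cols q z m. PC_array q z j k = Some s}"
      then obtain j k where "j \<in> rows q m" "k \<in> cols q z m" "PC_array q z j k = Some s" by blast
      then obtain a' t where "s = a' @ [t]" "a' \<in> rows q m" "t < q - z"
        using sym_sub[OF assms] by blast
      thus "s \<in> (\<lambda>(a, t). a @ [t]) ` (rows q m \<times> {..<q - z})" by force
    qed
    show "(\<lambda>(a, t). a @ [t]) ` (rows q m \<times> {..<q - z})
      \<subseteq> {s. \<exists>j\<in>rows q m. \<exists>k\<in>cols q z m. PC_array q z j k = Some s}"
    proof
      fix s assume "s \<in> (\<lambda>(a, t). a @ [t]) ` (rows q m \<times> {..<q - z})"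
      then obtain a t where "s = a @ [t]" "a \<in> rows q m" "t < q - z" by auto
      thus "s \<in> {s. \<exists>j\<in>rows q m. \<exists>k\<in>cols q z m. PC_array q z j k = Some s}"
        using sym_sup[OF assms] by blast
    qed
  qed
  have inj: "inj_on (\<lambda>(a, t). a @ [t]) (rows q m \<times> {..<q - z})"
    by (rule inj_onI) auto
  have "card ((\<lambda>(a, t). a @ [t]) ` (rows q m \<times> {..<q - z})) = card (rows q m \<times> {..<q - z})"
    by (rule card_image[OF inj])
  also have "\<dots> = q ^ m * (q - z)" by (simp add: card_cartesian_product card_rows)
  finally show ?thesis unfolding eq by simp
qed


theorem theorem5:
  fixes q z m :: nat
  assumes "q \<ge> 2" and "z \<ge> 1" and "z < q" and "m \<ge> 1"
  shows "is_PDA (rows q m) (cols q z m) (PC_array q z)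
           ((m * L_of q z + 1) * q) (q ^ m) (z * q ^ (m - 1)) ((q - z) * q ^ m)
         \<and> real (z * q ^ (m - 1)) / real (q ^ m) = real z / real q
         \<and> real ((q - z) * q ^ m) / real (q ^ m) = real q - real z"
proof -
  have f1: "finite (rows q m)" by (rule finite_rows)
  have f2: "finite (cols q z m)" by (rule finite_cols)
  have f3: "card (cols q z m) = (m * L_of q z + 1) * q" by (rule card_cols)
  have f4: "card (rows q m) = q ^ m" by (rule card_rows)
  have f5: "\<forall>k\<in>cols q z m. card {j \<in> rows q m. PC_array q z j k = None} = z * q ^ (m - 1)"
    using Zcount[OF assms(3,4)] by blast
  have f6: "card {s. \<exists>j\<in>rows q m. \<exists>k\<in>cols q z m. PC_array q z j k = Some s} = (q - z) * q ^ m"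
    by (rule Scount[OF assms(3)])
  have f7: "\<forall>j1\<in>rows q m. \<forall>k1\<in>cols q z m. \<forall>j2\<in>rows q m. \<forall>k2\<in>cols q z m. \<forall>s.
        (j1, k1) \<noteq> (j2, k2) \<and> PC_array q z j1 k1 = Some s \<and> PC_array q z j2 k2 = Some s \<longrightarrow>
        j1 \<noteq> j2 \<and> k1 \<noteq> k2 \<and> PC_array q z j1 k2 = None \<and> PC_array q z j2 k1 = None"
  proof (intro ballI allI impI)
    fix j1 k1 j2 k2 s
    assume r: "j1 \<in> rows q m" "k1 \<in> cols q z m" "j2 \<in> rows q m" "k2 \<in> cols q z m"
      and H: "(j1, k1) \<noteq> (j2, k2) \<and> PC_array q z j1 k1 = Some s \<and> PC_array q z j2 k2 = Some s"
    have n1: "PC_array q z j1 k2 = None" using dir[OF assms(3) r(1,3,2,4)] H by blast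
    have H': "(j2, k2) \<noteq> (j1, k1)" using H by auto
    have n2: "PC_array q z j2 k1 = None" using dir[OF assms(3) r(3,1,4,2) H'] H by blast
    have "j1 \<noteq> j2" using n1 H by auto
    moreover have "k1 \<noteq> k2" using n1 H by auto
    ultimately show "j1 \<noteq> j2 \<and> k1 \<noteq> k2 \<and> PC_array q z j1 k2 = None \<and> PC_array q z j2 k1 = None"
      using n1 n2 by blast
  qed
  have pda: "is_PDA (rows q m) (cols q z m) (PC_array q z)
           ((m * L_of q z + 1) * q) (q ^ m) (z * q ^ (m - 1)) ((q - z) * q ^ m)"
    unfolding is_PDA_def using f1 f2 f3 f4 f5 f6 f7 by blast
  obtain m' where m': "m = Suc m'" using assms(4) by (cases m) auto
  have qp: "0 < real q" "0 < real (q ^ m')" using assms by auto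
  have r1: "real (z * q ^ (m - 1)) / real (q ^ m) = real z / real q"
    using qp unfolding m' by (simp add: field_simps)
  have r2: "real ((q - z) * q ^ m) / real (q ^ m) = real q - real z"
    using qp assms(3) unfolding m' by (simp add: of_nat_diff)
  show ?thesis using pda r1 r2 by blast
qed

end
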